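(* Let $G$ be a group and $K$ a finite index subgroup of $G$. Suppose $\tilde K\le K$ is a finite index subgroup, $\phi:\tilde K\to K$ is a homomorphism and $X$ is a transversal of $\tilde K$ in $K$ such that the action of $K$ on $X^*$ associated to $(K,\tilde K,\phi,X)$ is faithful. Let $\tilde\phi:\tilde K\to G$ be the composition of $\phi$ with the inclusion $K\hookrightarrow G$, and let $Y$ be a transversal of $\tilde K$ in $G$. Then the action of $G$ on the tree $Y^*$ associated to $(G,\tilde K,\tilde\phi,Y)$ is a faithful self-similar action.
   Context: Construction of the action associated to a quadruple $(\Gamma,L,\psi,Z)$: $\Gamma$ is a group, $L\le\Gamma$ of finite index, $\psi:L\to\Gamma$ a homomorphism (a virtual endomorphism), and $Z$ a set of representatives of the left cosets $zL$ of $L$ in $\Gamma$. For $g\in\Gamma$ and $z\in Z$ let $z'\in Z$ be the representative with $gzL=z'L$, so $z'^{-1}gz\in L$. The associated action of $\Gamma$ on the rooted tree with vertex set $Z^*$ (finite words over $Z$) is defined recursively on word length by $g(\varnothing)=\varnothing$ and $g(zw)=z'\,\big(\psi(z'^{-1}gz)\big)(w)$. It is an action by tree automorphisms in which every state of (the image of) each element is again (the image of) an element of $\Gamma$, i.e. it is self-similar; its kernel is the $\psi$-core of $L$, i.e. the largest subgroup $M\le L$ with $\psi(M)\le M$ that is normal in $\Gamma$, which equals $\bigcap_{m\ge1}\bigcap_{g\in\Gamma}g^{-1}\mathrm{Dom}(\psi^m)g$. *)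

theory Defs
  imports "HOL-Algebra.Algebra"
begin

definition finite_index_subgroup :: "('a, 'b) monoid_scheme \<Rightarrow> 'a set \<Rightarrow> bool" where
  "finite_index_subgroup G L \<longleftrightarrow>
     subgroup L G \<and> finite {g <#\<^bsub>G\<^esub> L | g. g \<in> carrier G}"

definition left_transversal :: "('a, 'b) monoid_scheme \<Rightarrow> 'a set \<Rightarrow> 'a set \<Rightarrow> bool" where
  "left_transversal G L Z \<longleftrightarrow>
     Z \<subseteq> carrier G \<and> (\<forall>g \<in> carrier G. \<exists>!z. z \<in> Z \<and> g \<in> z <#\<^bsub>G\<^esub> L)"

definition coset_rep :: "('a, 'b) monoid_scheme \<Rightarrow> 'a set \<Rightarrow> 'a set \<Rightarrow> 'a \<Rightarrow> 'a" where
  "coset_rep G L Z x = (THE z. z \<in> Z \<and> x \<in> z <#\<^bsub>G\<^esub> L)"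

fun assoc_act :: "('a, 'b) monoid_scheme \<Rightarrow> 'a set \<Rightarrow> ('a \<Rightarrow> 'a) \<Rightarrow> 'a set \<Rightarrow> 'a \<Rightarrow> 'a list \<Rightarrow> 'a list" where
  "assoc_act G L psi Z g [] = []"
| "assoc_act G L psi Z g (z # w) =
     (let z' = coset_rep G L Z (g \<otimes>\<^bsub>G\<^esub> z)
      in z' # assoc_act G L psi Z (psi (inv\<^bsub>G\<^esub> z' \<otimes>\<^bsub>G\<^esub> g \<otimes>\<^bsub>G\<^esub> z)) w)"

text \<open>alpha is an action of G by automorphisms of the rooted tree Z^* :
  length- and prefix-preserving maps of words, forming a group action.\<close>
definition tree_action :: "('a, 'b) monoid_scheme \<Rightarrow> 'c set \<Rightarrow> ('a \<Rightarrow> 'c list \<Rightarrow> 'c list) \<Rightarrow> bool" where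
  "tree_action G Z \<alpha> \<longleftrightarrow>
     (\<forall>g \<in> carrier G. \<forall>w \<in> lists Z. \<alpha> g w \<in> lists Z \<and> length (\<alpha> g w) = length w) \<and>
     (\<forall>g \<in> carrier G. \<forall>v \<in> lists Z. \<forall>w \<in> lists Z. take (length v) (\<alpha> g (v @ w)) = \<alpha> g v) \<and>
     (\<forall>w \<in> lists Z. \<alpha> \<one>\<^bsub>G\<^esub> w = w) \<and>
     (\<forall>g \<in> carrier G. \<forall>h \<in> carrier G. \<forall>w \<in> lists Z. \<alpha> (g \<otimes>\<^bsub>G\<^esub> h) w = \<alpha> g (\<alpha> h w))"

text \<open>Self-similarity: every state (section) of every element is again (the image of) an element.\<close>
definition self_similar :: "('a, 'b) monoid_scheme \<Rightarrow> 'c set \<Rightarrow> ('a \<Rightarrow> 'c list \<Rightarrow> 'c list) \<Rightarrow> bool" where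
  "self_similar G Z \<alpha> \<longleftrightarrow>
     (\<forall>g \<in> carrier G. \<forall>v \<in> lists Z. \<exists>h \<in> carrier G.
        \<forall>w \<in> lists Z. \<alpha> g (v @ w) = \<alpha> g v @ \<alpha> h w)"

definition faithful_tree_action :: "('a, 'b) monoid_scheme \<Rightarrow> 'c set \<Rightarrow> ('a \<Rightarrow> 'c list \<Rightarrow> 'c list) \<Rightarrow> bool" where
  "faithful_tree_action G Z \<alpha> \<longleftrightarrow>
     (\<forall>g \<in> carrier G. (\<forall>w \<in> lists Z. \<alpha> g w = w) \<longrightarrow> g = \<one>\<^bsub>G\<^esub>)"

end

theory Submission
  imports Defs
begin

locale aact = group G for G (structure) +
  fixes L Z psi
  assumes L: "subgroup L G" and T: "left_transversal G L Z"
    and psiC: "\<And>x. x \<in> L \<Longrightarrow> psi x \<in> carrier G"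
    and psiM: "\<And>x y. x \<in> L \<Longrightarrow> y \<in> L \<Longrightarrow> psi (x \<otimes> y) = psi x \<otimes> psi y"
begin

abbreviation "act \<equiv> assoc_act G L psi Z"
abbreviation "rep \<equiv> coset_rep G L Z"

lemma ZC: "Z \<subseteq> carrier G" using T unfolding left_transversal_def by (rule conjunct1)

lemma TU: "g \<in> carrier G \<Longrightarrow> \<exists>!z. z \<in> Z \<and> g \<in> z <# L"
proof -
  assume g: "g \<in> carrier G"
  have "\<forall>g\<in>carrier G. \<exists>!z. z \<in> Z \<and> g \<in> z <# L" using T unfolding left_transversal_def by (rule conjunct2)
  then show ?thesis using g by (rule bspec)
qed

lemma LC: "x \<in> L \<Longrightarrow> x \<in> carrier G" by (rule subgroup.mem_carrier[OF L])

lemma rcl: assumes "x \<in> carrier G" "y \<in> carrier G" shows "x \<otimes> (inv x \<otimes> y) = y"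
proof -
  have "x \<otimes> (inv x \<otimes> y) = (x \<otimes> inv x) \<otimes> y" using assms by (simp only: m_assoc inv_closed)
  also have "\<dots> = y" using assms by (simp only: r_inv l_one)
  finally show ?thesis .
qed

lemma lcl: assumes "x \<in> carrier G" "y \<in> carrier G" shows "inv x \<otimes> (x \<otimes> y) = y"
proof -
  have "inv x \<otimes> (x \<otimes> y) = (inv x \<otimes> x) \<otimes> y" using assms by (simp only: m_assoc inv_closed)
  also have "\<dots> = y" using assms by (simp only: l_inv l_one)
  finally show ?thesis .
qed

lemma mem_lcoset:
  assumes "g \<in> carrier G" "z \<in> carrier G"
  shows "g \<in> z <# L \<longleftrightarrow> inv z \<otimes> g \<in> L"
proof
  assume "g \<in> z <# L"
  then obtain h where h: "h \<in> L" "g = z \<otimes> h" unfolding l_coset_def by blast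
  then have "inv z \<otimes> g = h" using lcl[OF assms(2) LC[OF h(1)]] by simp
  then show "inv z \<otimes> g \<in> L" using h by simp
next
  assume a: "inv z \<otimes> g \<in> L"
  have e: "g = z \<otimes> (inv z \<otimes> g)" using rcl[OF assms(2,1)] by simp
  show "g \<in> z <# L" unfolding l_coset_def
    by (rule UN_I[OF a], subst e, rule singletonI)
qed

lemma rep: assumes "g \<in> carrier G" shows "rep g \<in> Z" "g \<in> rep g <# L"
proof -
  have "\<exists>!z. z \<in> Z \<and> g \<in> z <# L" using assms(1) by (rule TU)
  then have "rep g \<in> Z \<and> g \<in> rep g <# L" unfolding coset_rep_def by (rule theI')
  then show "rep g \<in> Z" "g \<in> rep g <# L" by auto
qed

lemma rep_unique: assumes "g \<in> carrier G" "z \<in> Z" "g \<in> z <# L" shows "rep g = z"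
proof -
  have "\<exists>!z. z \<in> Z \<and> g \<in> z <# L" using assms(1) by (rule TU)
  then show ?thesis unfolding coset_rep_def by (rule the1_equality) (use assms in blast)
qed

lemma repC: "g \<in> carrier G \<Longrightarrow> rep g \<in> carrier G" using rep ZC by blast

lemma stL: assumes "g \<in> carrier G" "z \<in> Z"
  shows "inv (rep (g \<otimes> z)) \<otimes> g \<otimes> z \<in> L"
proof -
  have zc: "z \<in> carrier G" using assms ZC by blast
  have gz: "g \<otimes> z \<in> carrier G" using assms(1) zc by (rule m_closed)
  have "g \<otimes> z \<in> rep (g \<otimes> z) <# L" using rep(2)[OF gz] .
  then have "inv (rep (g \<otimes> z)) \<otimes> (g \<otimes> z) \<in> L" using mem_lcoset[OF gz repC[OF gz]] by blast
  moreover have "inv (rep (g \<otimes> z)) \<otimes> (g \<otimes> z) = inv (rep (g \<otimes> z)) \<otimes> g \<otimes> z"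
    using zc assms(1) repC[OF gz] by (simp only: m_assoc inv_closed)
  ultimately show ?thesis by simp
qed

lemma stC: "g \<in> carrier G \<Longrightarrow> z \<in> Z \<Longrightarrow> psi (inv (rep (g \<otimes> z)) \<otimes> g \<otimes> z) \<in> carrier G"
  using stL psiC by blast

lemma act_Cons: "act g (z # w) = rep (g \<otimes> z) # act (psi (inv (rep (g \<otimes> z)) \<otimes> g \<otimes> z)) w"
  by (simp add: Let_def)

lemma psi_one: "psi \<one> = \<one>"
proof -
  have o: "\<one> \<in> L" by (rule subgroup.one_closed[OF L])
  have c: "psi \<one> \<in> carrier G" using psiC o by blast
  have "psi \<one> \<otimes> psi \<one> = psi \<one> \<otimes> \<one>" using psiM[OF o o] c by simp
  then show ?thesis using c by (metis l_cancel one_closed)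
qed

lemma act_lists: "g \<in> carrier G \<Longrightarrow> w \<in> lists Z \<Longrightarrow> act g w \<in> lists Z \<and> length (act g w) = length w"
proof (induction w arbitrary: g)
  case Nil then show ?case by simp
next
  case (Cons z w)
  have zZ: "z \<in> Z" and wL: "w \<in> lists Z" using Cons.prems by auto
  have zc: "z \<in> carrier G" using zZ ZC by blast
  have gz: "g \<otimes> z \<in> carrier G" using Cons.prems(1) zc by (rule m_closed)
  have rc: "rep (g \<otimes> z) \<in> Z" using rep(1)[OF gz] .
  have sc: "psi (inv (rep (g \<otimes> z)) \<otimes> g \<otimes> z) \<in> carrier G" using stC[OF Cons.prems(1) zZ] .
  have ih: "act (psi (inv (rep (g \<otimes> z)) \<otimes> g \<otimes> z)) w \<in> lists Z \<and>
     length (act (psi (inv (rep (g \<otimes> z)) \<otimes> g \<otimes> z)) w) = length w" using Cons.IH[OF sc wL] .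
  show ?case unfolding act_Cons using ih rc by simp
qed

lemma act_prefix: "take (length v) (act g (v @ w)) = act g v"
  by (induction v arbitrary: g) (simp_all only: act_Cons append_Cons length_Cons take_Suc_Cons, simp)

lemma act_one: "w \<in> lists Z \<Longrightarrow> act \<one> w = w"
proof (induction w)
  case Nil then show ?case by simp
next
  case (Cons z w)
  have zZ: "z \<in> Z" and wL: "w \<in> lists Z" using Cons.prems by auto
  have zc: "z \<in> carrier G" using zZ ZC by blast
  have oc: "\<one> \<otimes> z = z" using zc by (rule l_one)
  have "inv z \<otimes> z = \<one>" using zc by (rule l_inv)
  then have "inv z \<otimes> z \<in> L" using subgroup.one_closed[OF L] by simp
  then have "z \<in> z <# L" using mem_lcoset zc by blast
  then have r: "rep z = z" using rep_unique zc zZ by blast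
  have st: "inv z \<otimes> \<one> \<otimes> z = \<one>" using zc by simp
  show ?case unfolding act_Cons oc r st psi_one using Cons.IH[OF wL] by simp
qed

lemma act_comp: "g \<in> carrier G \<Longrightarrow> h \<in> carrier G \<Longrightarrow> w \<in> lists Z \<Longrightarrow> act (g \<otimes> h) w = act g (act h w)"
proof (induction w arbitrary: g h)
  case Nil then show ?case by simp
next
  case (Cons z w)
  have zc: "z \<in> carrier G" using Cons ZC by auto
  define z1 where "z1 = rep (h \<otimes> z)"
  define z2 where "z2 = rep (g \<otimes> z1)"
  have z1Z: "z1 \<in> Z" and z1c: "z1 \<in> carrier G" using z1_def rep repC Cons zc by auto
  have z2Z: "z2 \<in> Z" and z2c: "z2 \<in> carrier G" using z2_def rep repC Cons z1c by auto
  define a where "a = inv z2 \<otimes> g \<otimes> z1"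
  define b where "b = inv z1 \<otimes> h \<otimes> z"
  have aL: "a \<in> L" unfolding a_def z2_def using stL Cons z1Z by blast
  have bL: "b \<in> L" unfolding b_def z1_def using stL Cons by auto
  have eq: "inv z2 \<otimes> (g \<otimes> h) \<otimes> z = a \<otimes> b"
  proof -
    have "a \<otimes> b = inv z2 \<otimes> (g \<otimes> (z1 \<otimes> (inv z1 \<otimes> (h \<otimes> z))))"
      unfolding a_def b_def using z1c z2c zc Cons.prems by (simp add: m_assoc)
    also have "\<dots> = inv z2 \<otimes> (g \<otimes> (h \<otimes> z))" using rcl[of z1 "h \<otimes> z"] z1c zc Cons.prems by simp
    also have "\<dots> = inv z2 \<otimes> (g \<otimes> h) \<otimes> z" using z1c z2c zc Cons.prems by (simp add: m_assoc)
    finally show ?thesis by simp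
  qed
  have ghz: "g \<otimes> h \<otimes> z \<in> carrier G" using Cons zc by simp
  have abL: "a \<otimes> b \<in> L" using subgroup.m_closed[OF L aL bL] .
  have "inv z2 \<otimes> (g \<otimes> h \<otimes> z) = inv z2 \<otimes> (g \<otimes> h) \<otimes> z"
    using Cons.prems zc z2c by (simp add: m_assoc)
  then have "inv z2 \<otimes> (g \<otimes> h \<otimes> z) \<in> L" using eq abL by simp
  then have "g \<otimes> h \<otimes> z \<in> z2 <# L" using mem_lcoset ghz z2c by simp
  then have r: "rep (g \<otimes> h \<otimes> z) = z2" using rep_unique ghz z2Z by simp
  have wL: "w \<in> lists Z" using Cons.prems by simp
  have pa: "psi a \<in> carrier G" "psi b \<in> carrier G" using psiC aL bL by auto
  have "act (g \<otimes> h) (z # w) = z2 # act (psi a \<otimes> psi b) w"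
    by (simp only: act_Cons r eq psiM[OF aL bL])
  also have "\<dots> = z2 # act (psi a) (act (psi b) w)" using Cons.IH[OF pa wL] by simp
  also have "\<dots> = act g (z1 # act (psi b) w)"
    unfolding z2_def a_def by (rule act_Cons[symmetric])
  also have "\<dots> = act g (act h (z # w))"
    unfolding z1_def b_def by (simp only: act_Cons)
  finally show ?case .
qed

lemma tree: "tree_action G Z act"
  unfolding tree_action_def using act_lists act_prefix act_one act_comp by auto

lemma selfsim: "self_similar G Z act"
  unfolding self_similar_def
proof (intro ballI)
  fix g v assume "g \<in> carrier G" "v \<in> lists Z"
  then show "\<exists>h\<in>carrier G. \<forall>w\<in>lists Z. act g (v @ w) = act g v @ act h w"
  proof (induction v arbitrary: g)
    case Nil then show ?case by auto
  next
    case (Cons z v)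
    have zZ: "z \<in> Z" "v \<in> lists Z" using Cons.prems by auto
    obtain h where "h \<in> carrier G" "\<forall>w\<in>lists Z. act (psi (inv (rep (g \<otimes> z)) \<otimes> g \<otimes> z)) (v @ w)
       = act (psi (inv (rep (g \<otimes> z)) \<otimes> g \<otimes> z)) v @ act h w"
      using Cons.IH[OF stC[OF Cons.prems(1) zZ(1)] zZ(2)] by blast
    then show ?case by (auto simp: Let_def)
  qed
qed

end


lemma mainTheorem5_aux:
  fixes G :: "('a, 'b) monoid_scheme" (structure)
    and K Kt XK Y :: "'a set" and phi :: "'a \<Rightarrow> 'a"
  assumes grp: "group G"
    and K: "finite_index_subgroup G K"
    and Kt: "finite_index_subgroup (G\<lparr>carrier := K\<rparr>) Kt"
    and hom: "phi \<in> hom (G\<lparr>carrier := Kt\<rparr>) (G\<lparr>carrier := K\<rparr>)"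
    and TK: "left_transversal (G\<lparr>carrier := K\<rparr>) Kt XK"
    and F: "faithful_tree_action (G\<lparr>carrier := K\<rparr>) XK (assoc_act (G\<lparr>carrier := K\<rparr>) Kt phi XK)"
    and TY: "left_transversal G Kt Y"
  shows "tree_action G Y (assoc_act G Kt phi Y)
       \<and> self_similar G Y (assoc_act G Kt phi Y)
       \<and> faithful_tree_action G Y (assoc_act G Kt phi Y)"
proof -
  interpret group G by (rule grp)
  have KG: "subgroup K G" using K unfolding finite_index_subgroup_def by (rule conjunct1)
  have KtK: "subgroup Kt (G\<lparr>carrier := K\<rparr>)" using Kt unfolding finite_index_subgroup_def by (rule conjunct1)
  have KtG: "subgroup Kt G" by (rule incl_subgroup[OF KG KtK])
  have KtsubK: "Kt \<subseteq> K" using subgroup.subset[OF KtK] by simp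
  have Ksub: "K \<subseteq> carrier G" by (rule subgroup.subset[OF KG])
  have phiK: "\<And>x. x \<in> Kt \<Longrightarrow> phi x \<in> K"
    using hom_in_carrier[OF hom] by simp
  have phiM: "\<And>x y. x \<in> Kt \<Longrightarrow> y \<in> Kt \<Longrightarrow> phi (x \<otimes> y) = phi x \<otimes> phi y"
    using hom_mult[OF hom] by simp
  have phiC: "\<And>x. x \<in> Kt \<Longrightarrow> phi x \<in> carrier G" using phiK Ksub by (meson subsetD)
  interpret GG: aact G Kt Y phi
    by (rule aact.intro[OF grp aact_axioms.intro[OF KtG TY phiC phiM]])
  have grpK: "group (G\<lparr>carrier := K\<rparr>)" by (rule subgroup_imp_group[OF KG])
  have phiC': "\<And>x. x \<in> Kt \<Longrightarrow> phi x \<in> carrier (G\<lparr>carrier := K\<rparr>)" using phiK by simp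
  have phiM': "\<And>x y. x \<in> Kt \<Longrightarrow> y \<in> Kt \<Longrightarrow> phi (x \<otimes>\<^bsub>G\<lparr>carrier := K\<rparr>\<^esub> y) = phi x \<otimes>\<^bsub>G\<lparr>carrier := K\<rparr>\<^esub> phi y"
      using phiM by simp
  interpret KK: aact "G\<lparr>carrier := K\<rparr>" Kt XK phi
    by (rule aact.intro[OF grpK aact_axioms.intro[OF KtK TK phiC' phiM']])
  define N where "N = {g \<in> carrier G. \<forall>w\<in>lists Y. GG.act g w = w}"
  have conj: "c \<otimes> n \<otimes> inv c \<in> N" if c: "c \<in> carrier G" and n: "n \<in> N" for c n
  proof -
    have nc: "n \<in> carrier G" and nw: "\<And>w. w \<in> lists Y \<Longrightarrow> GG.act n w = w" using n unfolding N_def by auto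
    have "GG.act (c \<otimes> n \<otimes> inv c) w = w" if w: "w \<in> lists Y" for w
    proof -
      have iw: "GG.act (inv c) w \<in> lists Y" using GG.act_lists[OF inv_closed[OF c] w] by (rule conjunct1)
      have "GG.act (c \<otimes> n \<otimes> inv c) w = GG.act (c \<otimes> n) (GG.act (inv c) w)"
        using GG.act_comp[OF m_closed[OF c nc] inv_closed[OF c] w] .
      also have "\<dots> = GG.act c (GG.act n (GG.act (inv c) w))"
        using GG.act_comp[OF c nc iw] .
      also have "\<dots> = GG.act c (GG.act (inv c) w)" using nw[OF iw] by simp
      also have "\<dots> = GG.act (c \<otimes> inv c) w" using GG.act_comp[OF c inv_closed[OF c] w] by simp
      also have "\<dots> = w" using GG.act_one[OF w] c by simp
      finally show ?thesis .
    qed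
    then show ?thesis unfolding N_def using c nc by simp
  qed
  have stN: "inv z \<otimes> n \<otimes> z \<in> Kt \<and> phi (inv z \<otimes> n \<otimes> z) \<in> N" if n: "n \<in> N" and z: "z \<in> Y" for n z
  proof -
    have nc: "n \<in> carrier G" and nw: "\<And>w. w \<in> lists Y \<Longrightarrow> GG.act n w = w" using n unfolding N_def by auto
    have zc: "z \<in> carrier G" using z GG.ZC by (meson subsetD)
    have e1: "GG.act n [z] = [z]" by (rule nw) (simp add: z)
    have e2: "GG.act n [z] = GG.rep (n \<otimes> z) # GG.act (phi (inv (GG.rep (n \<otimes> z)) \<otimes> n \<otimes> z)) []"
      by (rule GG.act_Cons)
    have r: "GG.rep (n \<otimes> z) = z" using e1 e2 by simp
    have inK: "inv z \<otimes> n \<otimes> z \<in> Kt" using GG.stL[OF nc z] r by simp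
    have pc: "phi (inv z \<otimes> n \<otimes> z) \<in> carrier G" using GG.stC[OF nc z] r by simp
    have "GG.act (phi (inv z \<otimes> n \<otimes> z)) w = w" if w: "w \<in> lists Y" for w
    proof -
      have "z # w \<in> lists Y" using z w by simp
      then have "GG.act n (z # w) = z # w" by (rule nw)
      then show ?thesis using r by (simp add: Let_def)
    qed
    then show ?thesis using inK pc unfolding N_def by simp
  qed
  have y0: "GG.rep \<one> \<in> Y" "\<one> \<in> GG.rep \<one> <# Kt" using GG.rep[OF one_closed] by auto
  define y0 where "y0 = GG.rep \<one>"
  have y0Y: "y0 \<in> Y" and y0c: "y0 \<in> carrier G" using y0 GG.ZC unfolding y0_def by auto
  have NKt: "m \<in> Kt \<and> phi m \<in> N" if m: "m \<in> N" for m
  proof -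
    have mc: "m \<in> carrier G" using m unfolding N_def by simp
    have nN: "y0 \<otimes> m \<otimes> inv y0 \<in> N" by (rule conj[OF y0c m])
    have eq: "inv y0 \<otimes> (y0 \<otimes> m \<otimes> inv y0) \<otimes> y0 = m"
      using y0c mc by (simp add: m_assoc GG.lcl)
    show ?thesis using stN[OF nN y0Y] eq by simp
  qed
  have Kact: "w \<in> lists XK \<Longrightarrow> \<forall>m\<in>N. KK.act m w = w" for w
  proof (induction w)
    case Nil then show ?case by simp
  next
    case (Cons x w)
    have xX: "x \<in> XK" and wL: "w \<in> lists XK" using Cons.prems by auto
    have xK: "x \<in> K" using xX KK.ZC by auto
    have xc: "x \<in> carrier G" using xK Ksub by auto
    show ?case
    proof
      fix m assume m: "m \<in> N"
      have mc: "m \<in> carrier G" using m unfolding N_def by simp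
      have mK: "m \<in> K" using NKt[OF m] KtsubK by auto
      have invx: "inv\<^bsub>G\<lparr>carrier := K\<rparr>\<^esub> x = inv x" using xK KG by simp
      have cN: "inv x \<otimes> m \<otimes> inv (inv x) \<in> N" by (rule conj[OF inv_closed[OF xc] m])
      then have cN': "inv x \<otimes> m \<otimes> x \<in> N" using xc by simp
      have cKt: "inv x \<otimes> m \<otimes> x \<in> Kt" using NKt[OF cN'] by simp
      have mxK: "m \<otimes> x \<in> K" using subgroup.m_closed[OF KG mK xK] .
      have "inv\<^bsub>G\<lparr>carrier := K\<rparr>\<^esub> x \<otimes>\<^bsub>G\<lparr>carrier := K\<rparr>\<^esub> (m \<otimes>\<^bsub>G\<lparr>carrier := K\<rparr>\<^esub> x) \<in> Kt"
        using cKt invx xc mc by (simp add: m_assoc)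
      then have "m \<otimes>\<^bsub>G\<lparr>carrier := K\<rparr>\<^esub> x \<in> x <#\<^bsub>G\<lparr>carrier := K\<rparr>\<^esub> Kt"
        using KK.mem_lcoset[of "m \<otimes>\<^bsub>G\<lparr>carrier := K\<rparr>\<^esub> x" x] mxK xK by simp
      then have r: "KK.rep (m \<otimes>\<^bsub>G\<lparr>carrier := K\<rparr>\<^esub> x) = x"
        using KK.rep_unique[of "m \<otimes>\<^bsub>G\<lparr>carrier := K\<rparr>\<^esub> x" x] mxK xX by simp
      have st: "inv\<^bsub>G\<lparr>carrier := K\<rparr>\<^esub> x \<otimes>\<^bsub>G\<lparr>carrier := K\<rparr>\<^esub> m \<otimes>\<^bsub>G\<lparr>carrier := K\<rparr>\<^esub> x
          = inv x \<otimes> m \<otimes> x" using invx by simp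
      have pN: "phi (inv x \<otimes> m \<otimes> x) \<in> N" using NKt[OF cN'] by simp
      have "KK.act m (x # w) = x # KK.act (phi (inv x \<otimes> m \<otimes> x)) w"
        unfolding KK.act_Cons r st ..
      also have "\<dots> = x # w" using Cons.IH[OF wL] pN by simp
      finally show "KK.act m (x # w) = x # w" .
    qed
  qed
  have faith: "faithful_tree_action G Y GG.act"
    unfolding faithful_tree_action_def
  proof (intro ballI impI)
    fix g assume g: "g \<in> carrier G" and triv: "\<forall>w\<in>lists Y. GG.act g w = w"
    have gN: "g \<in> N" unfolding N_def using g triv by simp
    have gK: "g \<in> carrier (G\<lparr>carrier := K\<rparr>)" using NKt[OF gN] KtsubK by auto
    have "\<forall>w\<in>lists XK. KK.act g w = w" using Kact gN by blast
    then have "g = \<one>\<^bsub>G\<lparr>carrier := K\<rparr>\<^esub>" using F gK unfolding faithful_tree_action_def by simp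
    then show "g = \<one>" by simp
  qed
  show ?thesis using GG.tree GG.selfsim faith by simp
qed

theorem mainTheorem5:
  fixes G :: "('a, 'b) monoid_scheme"
    and K Kt XK Y :: "'a set" and phi :: "'a \<Rightarrow> 'a"
  assumes "group G"
    and "finite_index_subgroup G K"
    and "finite_index_subgroup (G\<lparr>carrier := K\<rparr>) Kt"
    and "phi \<in> hom (G\<lparr>carrier := Kt\<rparr>) (G\<lparr>carrier := K\<rparr>)"
    and "left_transversal (G\<lparr>carrier := K\<rparr>) Kt XK"
    and "faithful_tree_action (G\<lparr>carrier := K\<rparr>) XK (assoc_act (G\<lparr>carrier := K\<rparr>) Kt phi XK)"
    and "left_transversal G Kt Y"
  shows "tree_action G Y (assoc_act G Kt phi Y)
       \<and> self_similar G Y (assoc_act G Kt phi Y)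
       \<and> faithful_tree_action G Y (assoc_act G Kt phi Y)"
  using mainTheorem5_aux[OF assms] .

end
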